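(* Let $\rho=\rho_n>0$ and let $m=m_n>1$ be integers. For $m=2,3,\dots$ let $\tilde\Omega_n(m)=\{\omega\in\Omega:\max_{1\le l\le L_n(\rho)}|C_{n,l}(\rho)|<m\}$. If $\rho\ge\rho_n^+(m)\equiv\frac1m\Big(1+\frac{(m+2)\log n+\log m!}{n\log2}\Big)$, then $\mathbb P\big(\liminf_{n\to\infty}\tilde\Omega_n(m)\big)=1$.
   Context: Let $\mathcal V_n=\{-1,1\}^n$ with nearest-neighbour (hypercube) graph structure. Let $(g(x))_{x\in\mathcal V_n}$, $n\ge1$, be i.i.d. standard Gaussians on $(\Omega,\mathcal F,\mathbb P)$, $\beta>0$, and $w_n(x)=\exp(-\beta\sqrt ng(x))$. For $\rho>0$ let $r_n(\rho)$ be defined by $2^{\rho n}\mathbb P(w_n(x)\ge r_n(\rho))=1$ and $V_n(\rho)=\{x:w_n(x)\ge r_n(\rho)\}$. $C_{n,l}(\rho)$, $1\le l\le L_n(\rho)$, are the vertex sets of the connected components with at least two vertices of the subgraph of the hypercube induced on $V_n(\rho)$. *)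

theory Defs
  imports "HOL-Probability.Probability"
begin

definition cube :: "nat \<Rightarrow> int list set" where
  "cube n = {x. length x = n \<and> set x \<subseteq> {-1, 1}}"

definition cube_adj :: "int list \<Rightarrow> int list \<Rightarrow> bool" where
  "cube_adj x y \<longleftrightarrow> length x = length y \<and> card {i. i < length x \<and> x ! i \<noteq> y ! i} = 1"

definition weight :: "real \<Rightarrow> (nat \<Rightarrow> int list \<Rightarrow> 'a \<Rightarrow> real) \<Rightarrow> nat \<Rightarrow> int list \<Rightarrow> 'a \<Rightarrow> real" where
  "weight \<beta> g n x \<omega> = exp (- \<beta> * sqrt (real n) * g n x \<omega>)"

definition thr :: "'a measure \<Rightarrow> real \<Rightarrow> (nat \<Rightarrow> int list \<Rightarrow> 'a \<Rightarrow> real) \<Rightarrow> nat \<Rightarrow> real \<Rightarrow> real" where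
  "thr M \<beta> g n \<rho> = (THE r. \<forall>x\<in>cube n.
      2 powr (\<rho> * real n) * measure M {\<omega> \<in> space M. weight \<beta> g n x \<omega> \<ge> r} = 1)"

definition Vset :: "'a measure \<Rightarrow> real \<Rightarrow> (nat \<Rightarrow> int list \<Rightarrow> 'a \<Rightarrow> real) \<Rightarrow> nat \<Rightarrow> real \<Rightarrow> 'a \<Rightarrow> int list set" where
  "Vset M \<beta> g n \<rho> \<omega> = {x \<in> cube n. weight \<beta> g n x \<omega> \<ge> thr M \<beta> g n \<rho>}"

definition induced_comp :: "int list set \<Rightarrow> int list \<Rightarrow> int list set" where
  "induced_comp V x = {y. (\<lambda>a b. a \<in> V \<and> b \<in> V \<and> cube_adj a b)\<^sup>*\<^sup>* x y}"

definition induced_components :: "int list set \<Rightarrow> int list set set" where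
  "induced_components V = {induced_comp V x | x. x \<in> V}"

definition clusters :: "'a measure \<Rightarrow> real \<Rightarrow> (nat \<Rightarrow> int list \<Rightarrow> 'a \<Rightarrow> real) \<Rightarrow> nat \<Rightarrow> real \<Rightarrow> 'a \<Rightarrow> int list set set" where
  "clusters M \<beta> g n \<rho> \<omega> = {C \<in> induced_components (Vset M \<beta> g n \<rho> \<omega>). card C \<ge> 2}"

text \<open>tilde Omega_n(m): all clusters have fewer than m vertices (max over empty family = 0).\<close>
definition Omega_tilde :: "'a measure \<Rightarrow> real \<Rightarrow> (nat \<Rightarrow> int list \<Rightarrow> 'a \<Rightarrow> real) \<Rightarrow> nat \<Rightarrow> real \<Rightarrow> nat \<Rightarrow> 'a set" where
  "Omega_tilde M \<beta> g n \<rho> m = {\<omega> \<in> space M. \<forall>C \<in> clusters M \<beta> g n \<rho> \<omega>. card C < m}"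

definition rho_plus :: "nat \<Rightarrow> nat \<Rightarrow> real" where
  "rho_plus n m = (1 / real m) * (1 + ((real m + 2) * ln (real n) + ln (fact m)) / (real n * ln 2))"

end

theory Submission
  imports Defs
begin


fun Seq :: "nat \<Rightarrow> nat \<Rightarrow> int list list set" where
  "Seq n 0 = {[]}"
| "Seq n (Suc k) = {xs @ [y] | xs y. xs \<in> Seq n k \<and> y \<in> cube n \<and> y \<notin> set xs \<and>
      (xs = [] \<or> (\<exists>z\<in>set xs. cube_adj z y))}"

lemma Seq_props: "xs \<in> Seq n k \<Longrightarrow> length xs = k \<and> distinct xs \<and> set xs \<subseteq> cube n"
proof (induction k arbitrary: xs)
  case (Suc k)
  then obtain ys y where "xs = ys @ [y]" "ys \<in> Seq n k" "y \<in> cube n" "y \<notin> set ys" by auto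
  thus ?case using Suc.IH[of ys] by auto
qed auto

lemma nbr_subset:
  assumes x: "x \<in> cube n"
  shows "{y \<in> cube n. cube_adj x y} \<subseteq> (\<lambda>i. x[i := - (x ! i)]) ` {..<n}"
proof
  fix y assume "y \<in> {y \<in> cube n. cube_adj x y}"
  hence y: "y \<in> cube n" and a: "cube_adj x y" by auto
  have lx: "length x = n" and ly: "length y = n" using x y by (auto simp: cube_def)
  have "card {i. i < n \<and> x ! i \<noteq> y ! i} = 1" using a lx ly by (simp add: cube_adj_def)
  then obtain i where D: "{i. i < n \<and> x ! i \<noteq> y ! i} = {i}" by (auto simp: card_Suc_eq)
  have iD: "i < n" "x ! i \<noteq> y ! i" using D by auto
  have "x ! i \<in> {-1,1}" using x iD lx nth_mem[of i x] unfolding cube_def by blast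
  moreover have "y ! i \<in> {-1,1}" using y iD ly nth_mem[of i y] unfolding cube_def by blast
  ultimately have yi: "y ! i = - (x ! i)" using iD by auto
  have "y = x[i := - (x ! i)]"
  proof (rule nth_equalityI)
    show "length y = length (x[i := - x ! i])" using lx ly by simp
    fix j assume "j < length y"
    hence j: "j < n" using ly by simp
    show "y ! j = x[i := - x ! i] ! j"
    proof (cases "j = i")
      case True thus ?thesis using yi lx j by simp
    next
      case False
      hence "j \<notin> {i. i < n \<and> x ! i \<noteq> y ! i}" using D by auto
      thus ?thesis using False j by auto
    qed
  qed
  thus "y \<in> (\<lambda>i. x[i := - (x ! i)]) ` {..<n}" using iD by auto
qed

lemma nbr_card: "x \<in> cube n \<Longrightarrow> card {y \<in> cube n. cube_adj x y} \<le> n"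
  by (metis (no_types, lifting) card_image_le card_lessThan finite_lessThan le_trans nbr_subset
      card_mono finite_imageI)

lemma finite_cube: "finite (cube n)"
proof -
  have "cube n = {xs. set xs \<subseteq> {-1,1} \<and> length xs = n}" by (auto simp: cube_def)
  thus ?thesis using finite_lists_length_eq[of "{-1,1::int}" n] by simp
qed

lemma card_cube: "card (cube n) = 2 ^ n"
proof -
  have "cube n = {xs. set xs \<subseteq> {-1,1} \<and> length xs = n}" by (auto simp: cube_def)
  thus ?thesis using card_lists_length_eq[of "{-1,1::int}" n] by (simp add: numeral_2_eq_2)
qed

definition Fn :: "nat \<Rightarrow> int list list \<Rightarrow> int list set" where
  "Fn n xs = (if xs = [] then cube n else (\<Union>z\<in>set xs. {y \<in> cube n. cube_adj z y}))"

lemma finite_Fn: "finite (Fn n xs)"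
  unfolding Fn_def using finite_cube by auto

lemma Seq_Suc_sub: "Seq n (Suc k) \<subseteq> (\<lambda>(xs,y). xs @ [y]) ` (SIGMA xs:Seq n k. Fn n xs)"
  by (auto simp: Fn_def image_iff)

lemma finite_Seq: "finite (Seq n k)"
proof (induction k)
  case (Suc k)
  show ?case
    by (rule finite_subset[OF Seq_Suc_sub]) (use Suc finite_Fn in auto)
qed simp

lemma card_Fn: assumes "xs \<in> Seq n k" "xs \<noteq> []" shows "card (Fn n xs) \<le> k * n"
proof -
  have P: "length xs = k" "distinct xs" "set xs \<subseteq> cube n" using Seq_props[OF assms(1)] by auto
  have "card (Fn n xs) \<le> (\<Sum>z\<in>set xs. card {y \<in> cube n. cube_adj z y})"
    unfolding Fn_def using assms(2) card_UN_le[of "set xs" "\<lambda>z. {y \<in> cube n. cube_adj z y}"] by simp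
  also have "\<dots> \<le> (\<Sum>z\<in>set xs. n)"
    by (rule sum_mono) (use P nbr_card in auto)
  also have "\<dots> = k * n" using P distinct_card by fastforce
  finally show ?thesis .
qed

lemma card_Seq: "card (Seq n (Suc k)) \<le> 2 ^ n * fact k * n ^ k"
proof (induction k)
  case 0
  have "card (Seq n (Suc 0)) \<le> card (SIGMA xs:Seq n 0. Fn n xs)"
    by (rule order.trans[OF card_mono[OF _ Seq_Suc_sub] card_image_le])
       (use finite_Seq finite_Fn in \<open>auto simp del: Seq.simps\<close>)
  also have "(SIGMA xs:Seq n 0. Fn n xs) = Pair [] ` cube n" by (auto simp: Fn_def)
  also have "card \<dots> = 2 ^ n" by (simp add: card_image card_cube inj_on_def)
  finally show ?case by simp
next
  case (Suc k)
  have "card (Seq n (Suc (Suc k))) \<le> card (SIGMA xs:Seq n (Suc k). Fn n xs)"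
    by (rule order.trans[OF card_mono[OF _ Seq_Suc_sub] card_image_le])
       (use finite_Seq finite_Fn in \<open>auto simp del: Seq.simps\<close>)
  also have "\<dots> = (\<Sum>xs\<in>Seq n (Suc k). card (Fn n xs))"
    by (rule card_SigmaI) (use finite_Seq finite_Fn in \<open>auto simp del: Seq.simps\<close>)
  also have "\<dots> \<le> (\<Sum>xs\<in>Seq n (Suc k). Suc k * n)"
  proof (rule sum_mono)
    fix xs assume xs: "xs \<in> Seq n (Suc k)"
    hence "xs \<noteq> []" using Seq_props[OF xs] by auto
    thus "card (Fn n xs) \<le> Suc k * n" using card_Fn xs by blast
  qed
  also have "\<dots> = card (Seq n (Suc k)) * (Suc k * n)" by simp
  also have "\<dots> \<le> (2 ^ n * fact k * n ^ k) * (Suc k * n)"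
    using Suc.IH by (rule mult_right_mono) simp
  also have "\<dots> = 2 ^ n * fact (Suc k) * n ^ Suc k" by (simp add: algebra_simps)
  finally show ?case .
qed

lemma comp_sub: "induced_comp V x \<subseteq> insert x V"
proof
  fix y assume "y \<in> induced_comp V x"
  hence "(\<lambda>a b. a \<in> V \<and> b \<in> V \<and> cube_adj a b)\<^sup>*\<^sup>* x y" by (simp add: induced_comp_def)
  thus "y \<in> insert x V" by (induction rule: rtranclp_induct) auto
qed

lemma comp_self: "x \<in> induced_comp V x" by (simp add: induced_comp_def)

lemma Seq_in_comp:
  "xs \<in> Seq n k \<Longrightarrow> set xs \<subseteq> V \<Longrightarrow> xs \<noteq> [] \<Longrightarrow> set xs \<subseteq> induced_comp V (hd xs)"
proof (induction k arbitrary: xs)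
  case (Suc k)
  then obtain ys y where xs: "xs = ys @ [y]" "ys \<in> Seq n k" "y \<in> cube n"
     "ys = [] \<or> (\<exists>z\<in>set ys. cube_adj z y)" by auto
  show ?case
  proof (cases "ys = []")
    case True thus ?thesis using xs comp_self by auto
  next
    case False
    then obtain z where z: "z \<in> set ys" "cube_adj z y" using xs by auto
    have IH: "set ys \<subseteq> induced_comp V (hd ys)" using Suc.IH[OF xs(2)] Suc.prems False xs by auto
    have "y \<in> V" "z \<in> V" using Suc.prems xs z by auto
    hence "y \<in> induced_comp V (hd ys)" using IH z
      by (auto simp: induced_comp_def intro: rtranclp.rtrancl_into_rtrancl)
    thus ?thesis using IH xs False by auto
  qed
qed simp

lemma rtranclp_exit:
  "R\<^sup>*\<^sup>* a b \<Longrightarrow> a \<in> S \<Longrightarrow> b \<notin> S \<Longrightarrow> \<exists>u v. u \<in> S \<and> v \<notin> S \<and> R u v \<and> R\<^sup>*\<^sup>* a v"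
proof (induction rule: rtranclp_induct)
  case (step c b)
  show ?case
  proof (cases "c \<in> S")
    case True thus ?thesis using step by (meson rtranclp.rtrancl_into_rtrancl)
  next
    case False thus ?thesis using step by blast
  qed
qed simp

lemma comp_Seq:
  assumes x0: "x0 \<in> V" and V: "V \<subseteq> cube n"
  shows "1 \<le> k \<Longrightarrow> k \<le> card (induced_comp V x0) \<Longrightarrow>
     \<exists>xs\<in>Seq n k. set xs \<subseteq> induced_comp V x0 \<and> x0 \<in> set xs"
proof (induction k)
  case 0 thus ?case by simp
next
  case (Suc k)
  show ?case
  proof (cases "k = 0")
    case True
    have "[x0] \<in> Seq n (Suc 0)" using x0 V by auto
    thus ?thesis using True comp_self by fastforce
  next
    case False
    then obtain xs where xs: "xs \<in> Seq n k" "set xs \<subseteq> induced_comp V x0" "x0 \<in> set xs"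
      using Suc by auto
    have P: "length xs = k" "distinct xs" using Seq_props[OF xs(1)] by auto
    have fin: "finite (induced_comp V x0)"
      using finite_subset[OF comp_sub] finite_subset[OF V finite_cube] by blast
    have "card (set xs) < card (induced_comp V x0)" using P Suc.prems distinct_card by fastforce
    then obtain y where y: "y \<in> induced_comp V x0" "y \<notin> set xs"
      using xs(2) by (metis card_mono fin not_less subsetI subset_antisym)
    let ?R = "\<lambda>a b. a \<in> V \<and> b \<in> V \<and> cube_adj a b"
    have "?R\<^sup>*\<^sup>* x0 y" using y by (simp add: induced_comp_def)
    from rtranclp_exit[OF this xs(3) y(2)] obtain u v where
      uv: "u \<in> set xs" "v \<notin> set xs" "?R u v" "?R\<^sup>*\<^sup>* x0 v" by blast
    have "xs @ [v] \<in> Seq n (Suc k)" using uv xs(1) V by auto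
    moreover have "set (xs @ [v]) \<subseteq> induced_comp V x0" using xs uv by (auto simp: induced_comp_def)
    ultimately show ?thesis using xs(3) by force
  qed
qed

lemma key_equiv:
  assumes V: "V \<subseteq> cube n" and m: "m \<ge> 2"
  shows "(\<exists>C \<in> induced_components V. card C \<ge> 2 \<and> \<not> card C < m) \<longleftrightarrow> (\<exists>xs \<in> Seq n m. set xs \<subseteq> V)"
proof
  assume "\<exists>C \<in> induced_components V. card C \<ge> 2 \<and> \<not> card C < m"
  then obtain x0 where x0: "x0 \<in> V" "m \<le> card (induced_comp V x0)"
    by (auto simp: induced_components_def)
  then obtain xs where "xs \<in> Seq n m" "set xs \<subseteq> induced_comp V x0" using comp_Seq[OF x0(1) V, of m] m by auto
  moreover have "induced_comp V x0 \<subseteq> V" using comp_sub x0 by blast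
  ultimately show "\<exists>xs \<in> Seq n m. set xs \<subseteq> V" by blast
next
  assume "\<exists>xs \<in> Seq n m. set xs \<subseteq> V"
  then obtain xs where xs: "xs \<in> Seq n m" "set xs \<subseteq> V" by blast
  have P: "length xs = m" "distinct xs" using Seq_props[OF xs(1)] by auto
  hence ne: "xs \<noteq> []" using m by auto
  have sub: "set xs \<subseteq> induced_comp V (hd xs)" using Seq_in_comp[OF xs ne] .
  have hV: "hd xs \<in> V" using xs(2) ne by auto
  have fin: "finite (induced_comp V (hd xs))"
    using finite_subset[OF comp_sub] finite_subset[OF V finite_cube] by blast
  have "m \<le> card (induced_comp V (hd xs))"
    using card_mono[OF fin sub] P distinct_card by fastforce
  thus "\<exists>C \<in> induced_components V. card C \<ge> 2 \<and> \<not> card C < m"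
    using hV m by (auto simp: induced_components_def)
qed



abbreviation "NN \<equiv> density lborel (\<lambda>t. ennreal (std_normal_density t))"

lemma NN_rd: "real_distribution NN"
proof -
  have "prob_space NN" using prob_space_normal_density by simp
  thus ?thesis unfolding real_distribution_def real_distribution_axioms_def by simp
qed

lemma NN_null_iff: "A \<in> null_sets NN \<longleftrightarrow> A \<in> sets borel \<and> A \<in> null_sets lborel"
proof -
  have m: "(\<lambda>t. ennreal (std_normal_density t)) \<in> borel_measurable lborel" by simp
  have pos: "\<And>x. ennreal (std_normal_density x) \<noteq> 0"
    using normal_density_pos[of 1 0] by (simp add: ennreal_eq_0_iff not_le)
  show ?thesis
  proof
    assume "A \<in> null_sets NN"
    hence A: "A \<in> sets lborel" "AE x in lborel. x \<in> A \<longrightarrow> ennreal (std_normal_density x) = 0"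
      using null_sets_density_iff[OF m] by auto
    hence "AE x in lborel. x \<notin> A" using pos by auto
    hence "{x \<in> space lborel. \<not> x \<notin> A} \<in> null_sets lborel" using A by (subst AE_iff_null[symmetric]) auto
    thus "A \<in> sets borel \<and> A \<in> null_sets lborel" using A by simp
  next
    assume "A \<in> sets borel \<and> A \<in> null_sets lborel"
    thus "A \<in> null_sets NN" using null_sets_density_iff[OF m]
      by (auto intro: AE_I' [where N=A])
  qed
qed

lemma NN_cont: "isCont (cdf NN) x"
proof -
  interpret real_distribution NN by (rule NN_rd)
  have "{x} \<in> null_sets NN" using NN_null_iff by (simp add: emeasure_lborel_countable null_setsI)
  hence "measure NN {x} = 0" by (simp add: measure_def null_sets_def)
  thus ?thesis using isCont_cdf by simp
qed

lemma NN_strict: assumes "a < b" shows "cdf NN a < cdf NN b"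
proof -
  interpret real_distribution NN by (rule NN_rd)
  have "{a<..b} \<notin> null_sets lborel" using assms by (simp add: null_sets_def)
  hence "{a<..b} \<notin> null_sets NN" using NN_null_iff by simp
  moreover have "measure NN {a<..b} = 0 \<Longrightarrow> {a<..b} \<in> null_sets NN"
    by (rule null_setsI) (simp_all add: emeasure_eq_measure)
  ultimately have "measure NN {a<..b} > 0" using zero_less_measure_iff by blast
  thus ?thesis using cdf_diff_eq[OF assms] by simp
qed

lemma NN_ivt: assumes "0 < q" "q < 1" shows "\<exists>t. cdf NN t = q"
proof -
  interpret real_distribution NN by (rule NN_rd)
  have "eventually (\<lambda>x. cdf NN x < q) at_bot"
    using order_tendstoD(2)[OF cdf_lim_at_bot assms(1)] .
  then obtain a where a: "\<And>x. x \<le> a \<Longrightarrow> cdf NN x < q" by (auto simp: eventually_at_bot_linorder)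
  have "eventually (\<lambda>x. cdf NN x > q) at_top"
    using order_tendstoD(1)[OF cdf_lim_at_top_prob assms(2)] .
  then obtain b where b: "\<And>x. x \<ge> b \<Longrightarrow> cdf NN x > q" by (auto simp: eventually_at_top_linorder)
  have c: "continuous_on {min a b .. max a b} (cdf NN)"
    using NN_cont by (simp add: continuous_at_imp_continuous_on)
  from IVT'[of "cdf NN" "min a b" q "max a b", OF _ _ _ c] a b
  show ?thesis by (meson less_imp_le max.cobounded2 min.cobounded1 min.cobounded2 order_trans max.cobounded1)
qed



lemma cube_ne: "replicate n 1 \<in> cube n" by (simp add: cube_def set_replicate_conv_if)

context prob_space begin

lemma prob_weight:
  assumes d: "distributed M lborel (g n x) (\<lambda>t. ennreal (std_normal_density t))"
  shows "prob {\<omega>\<in>space M. weight \<beta> g n x \<omega> \<ge> r}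
          = measure NN {t. r \<le> exp (- \<beta> * sqrt (real n) * t)}"
    and "{\<omega>\<in>space M. weight \<beta> g n x \<omega> \<ge> r} \<in> events"
proof -
  have D: "distr M lborel (g n x) = NN" and X: "g n x \<in> measurable M lborel"
    using d by (auto simp: distributed_def)
  have A: "{t. r \<le> exp (- \<beta> * sqrt (real n) * t)} \<in> sets borel" by measurable
  have eq: "{\<omega>\<in>space M. weight \<beta> g n x \<omega> \<ge> r} = g n x -` {t. r \<le> exp (- \<beta> * sqrt (real n) * t)} \<inter> space M"
    by (auto simp: weight_def)
  show "prob {\<omega>\<in>space M. weight \<beta> g n x \<omega> \<ge> r}
          = measure NN {t. r \<le> exp (- \<beta> * sqrt (real n) * t)}"
    unfolding eq D[symmetric] using A X by (subst measure_distr) auto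
  show "{\<omega>\<in>space M. weight \<beta> g n x \<omega> \<ge> r} \<in> events"
    unfolding eq using A X by (auto intro: measurable_sets)
qed

lemma H_nonpos: "r \<le> 0 \<Longrightarrow> measure NN {t. r \<le> exp (- \<beta> * sqrt (real n) * t)} = 1"
proof -
  assume "r \<le> 0"
  hence U: "{t. r \<le> exp (- \<beta> * sqrt (real n) * t)} = UNIV"
    by (auto intro: order_trans[OF _ less_imp_le[OF exp_gt_zero]])
  interpret N: real_distribution NN by (rule NN_rd)
  from U show ?thesis using N.prob_space by simp
qed

lemma H_pos: "r > 0 \<Longrightarrow> \<beta> > 0 \<Longrightarrow> n \<ge> 1 \<Longrightarrow>
  measure NN {t. r \<le> exp (- \<beta> * sqrt (real n) * t)} = cdf NN (- ln r / (\<beta> * sqrt (real n)))"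
proof -
  assume r: "r > 0" and b: "\<beta> > 0" and n: "n \<ge> 1"
  have c: "\<beta> * sqrt (real n) > 0" using b n by simp
  have "{t. r \<le> exp (- \<beta> * sqrt (real n) * t)} = {.. - ln r / (\<beta> * sqrt (real n))}"
  proof -
    have "r \<le> exp (- \<beta> * sqrt (real n) * t) \<longleftrightarrow> t \<le> - ln r / (\<beta> * sqrt (real n))" for t
    proof -
      have "r \<le> exp (- \<beta> * sqrt (real n) * t) \<longleftrightarrow> ln r \<le> - \<beta> * sqrt (real n) * t"
        using r ln_le_cancel_iff[of r "exp (- \<beta> * sqrt (real n) * t)"] by simp
      also have "\<dots> \<longleftrightarrow> (\<beta> * sqrt (real n)) * t \<le> - ln r" by linarith
      also have "\<dots> \<longleftrightarrow> t \<le> - ln r / (\<beta> * sqrt (real n))"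
        by (subst pos_le_divide_eq[OF c]) (simp add: mult.commute)
      finally show ?thesis .
    qed
    thus ?thesis by auto
  qed
  thus ?thesis by (simp add: cdf_def)
qed

lemma thr_prob:
  assumes b: "\<beta> > 0" and n: "n \<ge> 1" and rho: "\<rho> > 0"
    and d: "\<And>x. x \<in> cube n \<Longrightarrow> distributed M lborel (g n x) (\<lambda>t. ennreal (std_normal_density t))"
    and x: "x \<in> cube n"
  shows "prob {\<omega>\<in>space M. weight \<beta> g n x \<omega> \<ge> thr M \<beta> g n \<rho>} = 2 powr (- (\<rho> * real n))"
proof -
  define H where "H r = measure NN {t. r \<le> exp (- \<beta> * sqrt (real n) * t)}" for r
  define q where "q = 2 powr (- (\<rho> * real n))"
  have "2 powr (- (\<rho> * real n)) < 2 powr 0" using rho n by (intro powr_less_mono) auto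
  hence q: "0 < q" "q < 1" by (auto simp: q_def)
  have qq: "2 powr (\<rho> * real n) * h = 1 \<longleftrightarrow> h = q" for h
    by (auto simp: q_def powr_minus field_simps)
  have P: "(\<forall>x\<in>cube n. 2 powr (\<rho> * real n) * prob {\<omega> \<in> space M. weight \<beta> g n x \<omega> \<ge> r} = 1)
      \<longleftrightarrow> H r = q" for r
  proof -
    have Px: "x \<in> cube n \<Longrightarrow> prob {\<omega> \<in> space M. weight \<beta> g n x \<omega> \<ge> r} = H r" for x
      using prob_weight(1)[where g=g and n=n and x=x, OF d[of x]] unfolding H_def by simp
    show ?thesis
    proof
      assume "\<forall>x\<in>cube n. 2 powr (\<rho> * real n) * prob {\<omega> \<in> space M. weight \<beta> g n x \<omega> \<ge> r} = 1"
      hence "2 powr (\<rho> * real n) * H r = 1" using Px[OF cube_ne[of n]] cube_ne[of n] by auto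
      thus "H r = q" using qq by blast
    next
      assume "H r = q"
      thus "\<forall>x\<in>cube n. 2 powr (\<rho> * real n) * prob {\<omega> \<in> space M. weight \<beta> g n x \<omega> \<ge> r} = 1"
        using Px qq by auto
    qed
  qed
  have ex1: "\<exists>!r. H r = q"
  proof -
    obtain t where t: "cdf NN t = q" using NN_ivt[OF q] by blast
    have c: "\<beta> * sqrt (real n) > 0" using b n by simp
    let ?r = "exp (- (\<beta> * sqrt (real n)) * t)"
    have "- ln ?r / (\<beta> * sqrt (real n)) = t" using c b n by simp
    hence "H ?r = q" using H_pos[of ?r \<beta> n] b n t unfolding H_def by simp
    moreover have "r' = ?r" if "H r' = q" for r'
    proof -
      have r': "r' > 0" using that H_nonpos[of r'] q unfolding H_def by (cases "r' \<le> 0") auto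
      have "cdf NN (- ln r' / (\<beta> * sqrt (real n))) = cdf NN t"
        using that t H_pos[OF r' b n] unfolding H_def by simp
      hence "- ln r' / (\<beta> * sqrt (real n)) = t"
        by (cases rule: linorder_cases[of "- ln r' / (\<beta> * sqrt (real n))" t]) (auto dest: NN_strict)
      moreover have "ln r' = - ((- ln r' / (\<beta> * sqrt (real n))) * (\<beta> * sqrt (real n)))"
        using c b n by simp
      ultimately have "ln r' = - (\<beta> * sqrt (real n)) * t" by simp
      thus ?thesis using r' by (metis exp_ln)
    qed
    ultimately show ?thesis by blast
  qed
  have "H (thr M \<beta> g n \<rho>) = q"
    unfolding thr_def P using theI'[OF ex1] .
  thus ?thesis using prob_weight(1)[where g=g and n=n and x=x, OF d[OF x]] unfolding H_def q_def by simp
qed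

end


lemma arith_bound:
  fixes n m :: nat and \<rho> :: real
  assumes n: "n \<ge> 1" and m: "m \<ge> 2" and r: "\<rho> \<ge> rho_plus n m"
  shows "real (2 ^ n * fact (m - 1) * n ^ (m - 1)) * (2 powr (- (\<rho> * real n))) ^ m \<le> 1 / real n ^ 2"
proof -
  define L where "L = (real m + 2) * ln (real n) + ln (fact m)"
  have n0: "real n > 0" using n by simp
  have l2: "ln 2 > (0::real)" by simp
  have "\<rho> * real n * real m \<ge> rho_plus n m * real n * real m"
    using r n m by (intro mult_right_mono) auto
  also have "rho_plus n m * real n * real m = real n + L / ln 2"
    unfolding rho_plus_def L_def using n0 m l2 by (simp add: field_simps)
  finally have rho: "\<rho> * real n * real m \<ge> real n + L / ln 2" .
  have "(2 powr (- (\<rho> * real n))) ^ m = 2 powr (- (\<rho> * real n * real m))"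
    by (simp add: powr_power mult.commute)
  also have "\<dots> \<le> 2 powr (- (real n + L / ln 2))"
    using rho by (intro powr_mono) auto
  also have "\<dots> = exp (- (real n * ln 2) - L)"
    unfolding powr_def using l2 by (simp add: field_simps)
  also have "\<dots> = inverse (2 ^ n) * inverse (real n ^ (m + 2) * fact m)"
  proof -
    have "exp (real n * ln 2) = 2 ^ n" by (simp add: exp_of_nat_mult)
    moreover have "exp L = real n ^ (m + 2) * fact m"
    proof -
      have "exp ((real m + 2) * ln (real n)) = exp (ln (real n)) ^ (m + 2)"
        using exp_of_nat_mult[of "m+2" "ln (real n)"] by (simp add: add.commute)
      also have "\<dots> = real n ^ (m + 2)" using n0 by simp
      finally show ?thesis unfolding L_def by (simp add: exp_add)
    qed
    ultimately show ?thesis by (simp add: exp_diff exp_minus divide_inverse)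
  qed
  finally have q: "(2 powr (- (\<rho> * real n))) ^ m \<le> inverse (2 ^ n) * inverse (real n ^ (m + 2) * fact m)" .
  have fm: "(fact m :: real) = real m * fact (m - 1)"
    using m by (metis fact_Suc Suc_diff_1 of_nat_Suc less_le_trans pos2 zero_less_numeral)
  have nm: "real n ^ (m + 2) = real n ^ (m - 1) * real n ^ 3"
    using m by (simp add: power_add[symmetric])
  have "real (2 ^ n * fact (m - 1) * n ^ (m - 1)) * (2 powr (- (\<rho> * real n))) ^ m
      \<le> real (2 ^ n * fact (m - 1) * n ^ (m - 1)) * (inverse (2 ^ n) * inverse (real n ^ (m + 2) * fact m))"
    using q by (intro mult_left_mono) auto
  also have "\<dots> = 1 / (real m * real n ^ 3)"
    unfolding fm nm using n0 m by (simp add: field_simps)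
  also have "\<dots> \<le> 1 / real n ^ 2"
  proof -
    have "real n ^ 2 \<le> real m * real n ^ 3"
    proof -
      have "real n ^ 2 \<le> real n ^ 3" using n by (intro power_increasing) auto
      also have "\<dots> \<le> real m * real n ^ 3" using m mult_right_mono[of 1 "real m" "real n ^ 3"] by simp
      finally show ?thesis .
    qed
    thus ?thesis using n0 m by (intro divide_left_mono) auto
  qed
  finally show ?thesis .
qed



theorem lemma2p2:
  fixes M :: "'a measure" and g :: "nat \<Rightarrow> int list \<Rightarrow> 'a \<Rightarrow> real" and \<beta> :: real
    and \<rho> :: "nat \<Rightarrow> real" and m :: "nat \<Rightarrow> nat"
  assumes "prob_space M"
    and "\<beta> > 0"
    and "prob_space.indep_vars M (\<lambda>_. borel) (\<lambda>(n, x). g n x) {(n, x). n \<ge> 1 \<and> x \<in> cube n}"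
    and "\<And>n x. n \<ge> 1 \<Longrightarrow> x \<in> cube n \<Longrightarrow>
           distributed M lborel (g n x) (\<lambda>t. ennreal (std_normal_density t))"
    and "\<And>n. \<rho> n > 0"
    and "\<And>n. m n > 1"
    and "\<And>n. n \<ge> 1 \<Longrightarrow> \<rho> n \<ge> rho_plus n (m n)"
  shows "measure M {\<omega> \<in> space M. \<exists>N. \<forall>n\<ge>N. \<omega> \<in> Omega_tilde M \<beta> g n (\<rho> n) (m n)} = 1"
proof -
  interpret prob_space M by fact
  note b = assms(2) and ind = assms(3) and d = assms(4) and rho = assms(5) and mm = assms(6)
    and rp = assms(7)
  define E where "E n v = {\<omega>\<in>space M. weight \<beta> g n v \<omega> \<ge> thr M \<beta> g n (\<rho> n)}" for n v
  define B where "B n = (\<Union>xs\<in>Seq n (m n). \<Inter>v\<in>set xs. E n v)" for n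
  define q where "q n = 2 powr (- (\<rho> n * real n))" for n
  have m2: "m n \<ge> 2" for n using mm[of n] by simp
  have Eev: "n \<ge> 1 \<Longrightarrow> v \<in> cube n \<Longrightarrow> E n v \<in> events" for n v
    unfolding E_def by (rule prob_weight(2)[where g=g and n=n and x=v, OF d])
  have Eprob: "n \<ge> 1 \<Longrightarrow> v \<in> cube n \<Longrightarrow> prob (E n v) = q n" for n v
    unfolding E_def q_def by (rule thr_prob[OF b _ rho d]) auto
  have ne: "xs \<in> Seq n (m n) \<Longrightarrow> xs \<noteq> []" for n xs
    using Seq_props[of xs n "m n"] m2[of n] by auto
  have Bev: "n \<ge> 1 \<Longrightarrow> B n \<in> events" for n
    unfolding B_def
  proof (intro sets.finite_UN finite_Seq ballI sets.finite_INT)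
    fix xs v assume "n \<ge> 1" "xs \<in> Seq n (m n)" "v \<in> set xs"
    thus "E n v \<in> events" using Eev Seq_props by blast
  qed (auto dest: ne)
  have Om: "n \<ge> 1 \<Longrightarrow> Omega_tilde M \<beta> g n (\<rho> n) (m n) = space M - B n" for n
  proof -
    assume n: "n \<ge> 1"
    have "\<omega> \<notin> Omega_tilde M \<beta> g n (\<rho> n) (m n) \<longleftrightarrow> \<omega> \<in> B n" if w: "\<omega> \<in> space M" for \<omega>
    proof -
      let ?V = "Vset M \<beta> g n (\<rho> n) \<omega>"
      have Vs: "?V \<subseteq> cube n" by (auto simp: Vset_def)
      have "\<omega> \<notin> Omega_tilde M \<beta> g n (\<rho> n) (m n) \<longleftrightarrow>
          (\<exists>C \<in> induced_components ?V. card C \<ge> 2 \<and> \<not> card C < m n)"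
        using w by (auto simp: Omega_tilde_def clusters_def)
      also have "\<dots> \<longleftrightarrow> (\<exists>xs \<in> Seq n (m n). set xs \<subseteq> ?V)" by (rule key_equiv[OF Vs m2])
      also have "\<dots> \<longleftrightarrow> \<omega> \<in> B n"
      proof
        assume "\<exists>xs \<in> Seq n (m n). set xs \<subseteq> ?V"
        then obtain xs where "xs \<in> Seq n (m n)" "set xs \<subseteq> ?V" by blast
        thus "\<omega> \<in> B n" using w unfolding B_def E_def Vset_def by auto
      next
        assume "\<omega> \<in> B n"
        then obtain xs where xs: "xs \<in> Seq n (m n)" "\<forall>v\<in>set xs. \<omega> \<in> E n v" unfolding B_def by auto
        have "set xs \<subseteq> ?V" using xs Seq_props[OF xs(1)] unfolding Vset_def E_def by auto
        thus "\<exists>xs \<in> Seq n (m n). set xs \<subseteq> ?V" using xs by blast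
      qed
      finally show ?thesis .
    qed
    moreover have "Omega_tilde M \<beta> g n (\<rho> n) (m n) \<subseteq> space M" by (auto simp: Omega_tilde_def)
    ultimately show ?thesis by blast
  qed
  have IS: "indep_sets (\<lambda>i. {(\<lambda>(n, x). g n x) i -` A \<inter> space M | A. A \<in> sets borel})
        {(n, x). n \<ge> 1 \<and> x \<in> cube n}"
    using ind unfolding indep_vars_def2 by blast
  have Iprob: "n \<ge> 1 \<Longrightarrow> xs \<in> Seq n (m n) \<Longrightarrow> prob (\<Inter>v\<in>set xs. E n v) = q n ^ m n" for n xs
  proof -
    assume n: "n \<ge> 1" and xs: "xs \<in> Seq n (m n)"
    have P: "length xs = m n" "distinct xs" "set xs \<subseteq> cube n" using Seq_props[OF xs] by auto
    let ?J = "(\<lambda>v. (n, v)) ` set xs"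
    have "prob (\<Inter>j\<in>?J. E (fst j) (snd j)) = (\<Prod>j\<in>?J. prob (E (fst j) (snd j)))"
    proof (rule indep_setsD[OF IS])
      show "?J \<subseteq> {(n, x). n \<ge> 1 \<and> x \<in> cube n}" using P n by auto
      show "?J \<noteq> {}" using ne[OF xs] by auto
      show "finite ?J" by simp
      show "\<forall>j\<in>?J. E (fst j) (snd j) \<in> {(\<lambda>(n, x). g n x) j -` A \<inter> space M | A. A \<in> sets borel}"
      proof
        fix j assume "j \<in> ?J"
        then obtain v where j: "j = (n, v)" by auto
        have "E n v = g n v -` {t. thr M \<beta> g n (\<rho> n) \<le> exp (- \<beta> * sqrt (real n) * t)} \<inter> space M"
          by (auto simp: E_def weight_def)
        moreover have "{t. thr M \<beta> g n (\<rho> n) \<le> exp (- \<beta> * sqrt (real n) * t)} \<in> sets borel"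
          by measurable
        ultimately have "E (fst j) (snd j) = (\<lambda>(n, x). g n x) j -` {t. thr M \<beta> g n (\<rho> n) \<le> exp (- \<beta> * sqrt (real n) * t)} \<inter> space M
           \<and> {t. thr M \<beta> g n (\<rho> n) \<le> exp (- \<beta> * sqrt (real n) * t)} \<in> sets borel"
          using j by (simp only: fst_conv snd_conv case_prod_conv)
        thus "E (fst j) (snd j) \<in> {(\<lambda>(n, x). g n x) j -` A \<inter> space M | A. A \<in> sets borel}"
          by blast
      qed
    qed
    moreover have "(\<Inter>j\<in>?J. E (fst j) (snd j)) = (\<Inter>v\<in>set xs. E n v)" by auto
    moreover have "(\<Prod>j\<in>?J. prob (E (fst j) (snd j))) = (\<Prod>v\<in>set xs. prob (E n v))"
      by (subst prod.reindex) (auto simp: inj_on_def)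
    moreover have "(\<Prod>v\<in>set xs. prob (E n v)) = (\<Prod>v\<in>set xs. q n)"
      using Eprob[OF n] P by (intro prod.cong) auto
    moreover have "card (set xs) = m n" using P distinct_card by metis
    ultimately show ?thesis by simp
  qed
  have Bprob: "n \<ge> 1 \<Longrightarrow> prob (B n) \<le> inverse (real n ^ 2)" for n
  proof -
    assume n: "n \<ge> 1"
    have "prob (B n) \<le> (\<Sum>xs\<in>Seq n (m n). prob (\<Inter>v\<in>set xs. E n v))"
      unfolding B_def
    proof (rule measure_UNION_le[OF finite_Seq])
      fix xs assume xs: "xs \<in> Seq n (m n)"
      show "(\<Inter>v\<in>set xs. E n v) \<in> events"
        using ne[OF xs] Eev[OF n] Seq_props[OF xs] by (intro sets.finite_INT) auto
    qed
    also have "\<dots> = (\<Sum>xs\<in>Seq n (m n). q n ^ m n)" using Iprob[OF n] by simp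
    also have "\<dots> = real (card (Seq n (m n))) * q n ^ m n" by simp
    also have "\<dots> \<le> real (2 ^ n * fact (m n - 1) * n ^ (m n - 1)) * q n ^ m n"
    proof -
      have "m n = Suc (m n - 1)" using m2[of n] by simp
      hence "card (Seq n (m n)) \<le> 2 ^ n * fact (m n - 1) * n ^ (m n - 1)"
        using card_Seq[of n "m n - 1"] by simp
      hence "real (card (Seq n (m n))) \<le> real (2 ^ n * fact (m n - 1) * n ^ (m n - 1))"
        by (simp only: of_nat_le_iff)
      thus ?thesis by (rule mult_right_mono) (simp add: q_def)
    qed
    also have "\<dots> \<le> 1 / real n ^ 2" unfolding q_def by (rule arith_bound[OF n m2 rp[OF n]])
    finally show ?thesis by (simp add: divide_inverse)
  qed
  define B' where "B' k = B (Suc k)" for k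
  have B'ev[measurable]: "B' k \<in> events" for k unfolding B'_def by (rule Bev) simp
  have sumB: "summable (\<lambda>k. measure M (B' k))"
  proof (rule summable_comparison_test'[where N=0])
    show "summable (\<lambda>k. inverse (real (Suc k) ^ 2))"
      using summable_Suc_iff[of "\<lambda>n. inverse (real n ^ 2)"] inverse_power_summable[of 2] by simp
    fix k show "norm (measure M (B' k)) \<le> inverse (real (Suc k) ^ 2)"
      using Bprob[of "Suc k"] by (simp add: B'_def)
  qed
  have AE1: "AE \<omega> in M. eventually (\<lambda>k. \<omega> \<in> space M - B' k) sequentially"
    by (rule borel_cantelli_AE1) (use sumB in \<open>auto simp: emeasure_eq_measure\<close>)
  have setEq: "{\<omega> \<in> space M. \<exists>N. \<forall>n\<ge>N. \<omega> \<in> Omega_tilde M \<beta> g n (\<rho> n) (m n)}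
      = (\<Union>N. \<Inter>k\<in>{N..}. space M - B' k)"
  proof (intro equalityI subsetI)
    fix \<omega> assume "\<omega> \<in> {\<omega> \<in> space M. \<exists>N. \<forall>n\<ge>N. \<omega> \<in> Omega_tilde M \<beta> g n (\<rho> n) (m n)}"
    then obtain N where "\<forall>n\<ge>N. \<omega> \<in> Omega_tilde M \<beta> g n (\<rho> n) (m n)" by auto
    hence "\<forall>k\<ge>N. \<omega> \<in> space M - B' k"
    proof (intro allI impI)
      fix k assume "\<forall>n\<ge>N. \<omega> \<in> Omega_tilde M \<beta> g n (\<rho> n) (m n)" "N \<le> k"
      hence "\<omega> \<in> Omega_tilde M \<beta> g (Suc k) (\<rho> (Suc k)) (m (Suc k))" by simp
      thus "\<omega> \<in> space M - B' k" using Om[of "Suc k"] unfolding B'_def by simp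
    qed
    thus "\<omega> \<in> (\<Union>N. \<Inter>k\<in>{N..}. space M - B' k)" by auto
  next
    fix \<omega> assume "\<omega> \<in> (\<Union>N. \<Inter>k\<in>{N..}. space M - B' k)"
    then obtain N where N: "\<forall>k\<ge>N. \<omega> \<in> space M - B' k" by auto
    have "\<forall>n\<ge>Suc N. \<omega> \<in> Omega_tilde M \<beta> g n (\<rho> n) (m n)"
    proof (intro allI impI)
      fix n assume "Suc N \<le> n"
      hence k: "n = Suc (n - 1)" "n - 1 \<ge> N" by auto
      have "\<omega> \<in> space M - B (Suc (n - 1))" using N k(2) unfolding B'_def by blast
      thus "\<omega> \<in> Omega_tilde M \<beta> g n (\<rho> n) (m n)" using Om[of n] k(1) by simp
    qed
    thus "\<omega> \<in> {\<omega> \<in> space M. \<exists>N. \<forall>n\<ge>N. \<omega> \<in> Omega_tilde M \<beta> g n (\<rho> n) (m n)}"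
      using N by auto
  qed
  have meas: "{\<omega> \<in> space M. \<exists>N. \<forall>n\<ge>N. \<omega> \<in> Omega_tilde M \<beta> g n (\<rho> n) (m n)} \<in> events"
    unfolding setEq by measurable
  have "AE \<omega> in M. \<exists>N. \<forall>n\<ge>N. \<omega> \<in> Omega_tilde M \<beta> g n (\<rho> n) (m n)"
    using AE1
  proof (rule AE_mp, intro AE_I2 impI)
    fix \<omega> assume w: "\<omega> \<in> space M" and ev: "eventually (\<lambda>k. \<omega> \<in> space M - B' k) sequentially"
    then obtain N where "\<forall>k\<ge>N. \<omega> \<in> space M - B' k" by (auto simp: eventually_sequentially)
    hence "\<omega> \<in> (\<Union>N. \<Inter>k\<in>{N..}. space M - B' k)" by auto
    thus "\<exists>N. \<forall>n\<ge>N. \<omega> \<in> Omega_tilde M \<beta> g n (\<rho> n) (m n)" unfolding setEq[symmetric] by auto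
  qed
  thus ?thesis using prob_Collect_eq_1[OF meas] by simp
qed

end
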